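(* Let $A=(a(x),dF(x))$ and $B=(b(x),dF(x))$ be games and $p\in[0,1]$. If $g(p)$ exists, then $f(p)\le g(p)$.
   Context: A game is a pair $(a(x),dF(x))$ with $dF$ a probability measure on $\mathbb{R}$ and $a\ge0$ measurable with finite positive integral. A real $r$ is fixed; $\exp(-\infty)=0$. For $p\in[0,1]$ put $c_p(x):=pa(x)+(1-p)b(x)$ and $f(p):=\exp(\int\log c_p(x)\,dF(x))/e^r$. $g(p)$ denotes the value $u>0$ such that for some $t_u$ (with $0<t_u\le1$) the system $\exp\big(\int\log(\frac{c_p(x)}{u}t_u-t_u+1)\,dF(x)\big)=e^r$, $\int\frac{c_p(x)-u}{c_p(x)t_u-ut_u+u}\,dF(x)=0$ holds; when such a solution exists it is unique, and "$g(p)$ exists" means such a solution exists. *)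

theory Defs
  imports "HOL-Probability.Probability"
begin

definition game :: "real measure \<Rightarrow> (real \<Rightarrow> real) \<Rightarrow> bool" where
  "game M a \<longleftrightarrow> prob_space M \<and> sets M = sets borel \<and>
     a \<in> borel_measurable M \<and> (\<forall>x. 0 \<le> a x) \<and>
     integrable M a \<and> 0 < integral\<^sup>L M a"

text \<open>Extended-real valued integral: positive part minus negative part
  (the integral of log can be -\<infinity>).\<close>
definition eint :: "real measure \<Rightarrow> (real \<Rightarrow> ereal) \<Rightarrow> ereal" where
  "eint M h = enn2ereal (\<integral>\<^sup>+ x. e2ennreal (max 0 (h x)) \<partial>M)
            - enn2ereal (\<integral>\<^sup>+ x. e2ennreal (max 0 (- h x)) \<partial>M)"

definition eln :: "real \<Rightarrow> ereal" where
  "eln y = (if 0 < y then ereal (ln y) else -\<infinity>)"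

definition eexp :: "ereal \<Rightarrow> ereal" where
  "eexp z = (case z of ereal y \<Rightarrow> ereal (exp y) | PInfty \<Rightarrow> \<infinity> | MInfty \<Rightarrow> 0)"

definition cmix :: "(real \<Rightarrow> real) \<Rightarrow> (real \<Rightarrow> real) \<Rightarrow> real \<Rightarrow> real \<Rightarrow> real" where
  "cmix a b p x = p * a x + (1 - p) * b x"

definition fval :: "real measure \<Rightarrow> (real \<Rightarrow> real) \<Rightarrow> (real \<Rightarrow> real) \<Rightarrow> real \<Rightarrow> real \<Rightarrow> ereal" where
  "fval M a b r p = eexp (eint M (\<lambda>x. eln (cmix a b p x))) / ereal (exp r)"

text \<open>The integrand (c - u)/(c t - u t + u); the denominator vanishes only
  when t = 1 and c = 0, where the value is the limit -\<infinity>.\<close>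
definition gquot :: "real \<Rightarrow> real \<Rightarrow> real \<Rightarrow> ereal" where
  "gquot c u t = (let d = c * t - u * t + u in
      if 0 < d then ereal ((c - u) / d) else -\<infinity>)"

text \<open>u (with witness t_u) solves the system defining g(p).\<close>
definition gsolves :: "real measure \<Rightarrow> (real \<Rightarrow> real) \<Rightarrow> (real \<Rightarrow> real) \<Rightarrow> real \<Rightarrow> real \<Rightarrow> real \<Rightarrow> real \<Rightarrow> bool" where
  "gsolves M a b r p u t \<longleftrightarrow> 0 < u \<and> 0 < t \<and> t \<le> 1 \<and>
     eexp (eint M (\<lambda>x. eln (cmix a b p x / u * t - t + 1))) = ereal (exp r) \<and>
     eint M (\<lambda>x. gquot (cmix a b p x) u t) = 0"

end

theory Submission imports Defs begin

lemma e2_max_ereal: "e2ennreal (max 0 (ereal y)) = ennreal y"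
  by (metis e2ennreal_ereal ennreal_max_0 max_def zero_ereal_def ereal_less_eq(3))

lemma eint_real:
  assumes "integrable M g"
  shows "eint M (\<lambda>x. ereal (g x)) = ereal (integral\<^sup>L M g)"
proof -
  obtain r q where rq: "0 \<le> r" "0 \<le> q"
    "(\<integral>\<^sup>+x. ennreal (g x)\<partial>M) = ennreal r"
    "(\<integral>\<^sup>+x. ennreal (-g x)\<partial>M) = ennreal q"
    "integral\<^sup>L M g = r - q"
    using integrableE[OF assms] by metis
  have m: "\<And>x. - ereal (g x) = ereal (- g x)" by simp
  show ?thesis unfolding eint_def m e2_max_ereal using rq by simp
qed

lemma eint_mono_AE:
  assumes "AE x in M. f x \<le> g x"
  shows "eint M f \<le> eint M g"
proof -
  have 1: "(\<integral>\<^sup>+ x. e2ennreal (max 0 (f x)) \<partial>M) \<le> (\<integral>\<^sup>+ x. e2ennreal (max 0 (g x)) \<partial>M)"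
    by (rule nn_integral_mono_AE) (use assms in \<open>auto elim!: eventually_mono intro!: e2ennreal_mono max.mono\<close>)
  have 2: "(\<integral>\<^sup>+ x. e2ennreal (max 0 (- g x)) \<partial>M) \<le> (\<integral>\<^sup>+ x. e2ennreal (max 0 (- f x)) \<partial>M)"
    by (rule nn_integral_mono_AE) (use assms in \<open>auto elim!: eventually_mono intro!: e2ennreal_mono max.mono\<close>)
  show ?thesis unfolding eint_def
    by (rule ereal_minus_mono) (use 1 2 in \<open>simp_all add: less_eq_ennreal.rep_eq[symmetric]\<close>)
qed

lemma eint_finite:
  assumes fm: "f \<in> borel_measurable M" and e: "eint M f = ereal r"
  shows "AE x in M. \<bar>f x\<bar> \<noteq> \<infinity>"
    and "integrable M (\<lambda>x. real_of_ereal (f x))"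
    and "integral\<^sup>L M (\<lambda>x. real_of_ereal (f x)) = r"
proof -
  define P where "P = (\<integral>\<^sup>+ x. e2ennreal (max 0 (f x)) \<partial>M)"
  define N where "N = (\<integral>\<^sup>+ x. e2ennreal (max 0 (- f x)) \<partial>M)"
  have PN: "enn2ereal P - enn2ereal N = ereal r" using e unfolding eint_def P_def N_def by simp
  obtain p q where pq: "P = ennreal p" "N = ennreal q" "0 \<le> p" "0 \<le> q" "p - q = r"
  proof (cases P rule: ennreal_cases; cases N rule: ennreal_cases)
  qed (use PN in auto)
  have mP: "(\<lambda>x. e2ennreal (max 0 (f x))) \<in> borel_measurable M" using fm by measurable
  have mN: "(\<lambda>x. e2ennreal (max 0 (- f x))) \<in> borel_measurable M" using fm by measurable
  have a1: "AE x in M. e2ennreal (max 0 (f x)) \<noteq> \<infinity>"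
    by (rule nn_integral_noteq_infinite[OF mP]) (use pq P_def in simp)
  have a2: "AE x in M. e2ennreal (max 0 (- f x)) \<noteq> \<infinity>"
    by (rule nn_integral_noteq_infinite[OF mN]) (use pq N_def in simp)
  have fin: "AE x in M. \<bar>f x\<bar> \<noteq> \<infinity>"
    using a1 a2 by eventually_elim (auto simp: e2ennreal_infty)
  then show "AE x in M. \<bar>f x\<bar> \<noteq> \<infinity>" .
  have cP: "(\<integral>\<^sup>+ x. ennreal (real_of_ereal (f x)) \<partial>M) = P" unfolding P_def
    by (rule nn_integral_cong_AE) (use fin in \<open>eventually_elim, auto simp: e2_max_ereal\<close>)
  have cN: "(\<integral>\<^sup>+ x. ennreal (- real_of_ereal (f x)) \<partial>M) = N" unfolding N_def
    by (rule nn_integral_cong_AE) (use fin in \<open>eventually_elim, auto simp: e2_max_ereal\<close>)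
  have mg: "(\<lambda>x. real_of_ereal (f x)) \<in> borel_measurable M" using fm by measurable
  show i: "integrable M (\<lambda>x. real_of_ereal (f x))"
    unfolding real_integrable_def using mg cP cN pq by simp
  show "integral\<^sup>L M (\<lambda>x. real_of_ereal (f x)) = r"
    using real_lebesgue_integral_def[OF i] cP cN pq by simp
qed

lemma eln_meas[measurable]: "eln \<in> borel_measurable borel"
  unfolding eln_def by measurable

lemma gquot_meas[measurable]:
  assumes [measurable]: "f \<in> borel_measurable M"
  shows "(\<lambda>x. gquot (f x) u t) \<in> borel_measurable M"
  unfolding gquot_def Let_def by measurable

lemma eexp_mono_ereal: "z \<le> ereal y \<Longrightarrow> eexp z \<le> ereal (exp y)"
  by (cases z) (auto simp: eexp_def)

theorem lemmaD6:
  fixes M :: "real measure" and a b :: "real \<Rightarrow> real" and r p u t :: real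
  assumes "game M a" and "game M b"
    and "0 \<le> p" and "p \<le> 1"
    and "gsolves M a b r p u t"
  shows "fval M a b r p \<le> ereal u"
proof -
  define c where "c x = cmix a b p x" for x
  define h where "h x = c x / u * t - t + 1" for x
  have am[measurable]: "a \<in> borel_measurable M" and bm[measurable]: "b \<in> borel_measurable M"
    using assms(1,2) unfolding game_def by auto
  have cm[measurable]: "c \<in> borel_measurable M" unfolding c_def cmix_def by measurable
  have hm[measurable]: "h \<in> borel_measurable M" unfolding h_def by measurable
  have c0: "0 \<le> c x" for x using assms(1-4) unfolding game_def c_def cmix_def by auto
  have u0: "0 < u" and t0: "0 < t" and t1: "t \<le> 1"
    and e1: "eexp (eint M (\<lambda>x. eln (h x))) = ereal (exp r)"
    and e2: "eint M (\<lambda>x. gquot (c x) u t) = 0"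
    using assms(5) unfolding gsolves_def h_def c_def by auto
  have e1': "eint M (\<lambda>x. eln (h x)) = ereal r"
    using e1 by (cases "eint M (\<lambda>x. eln (h x))") (auto simp: eexp_def)
  have lm: "(\<lambda>x. eln (h x)) \<in> borel_measurable M" by measurable
  have qm: "(\<lambda>x. gquot (c x) u t) \<in> borel_measurable M" by measurable
  note F1 = eint_finite[OF lm e1']
  note F2 = eint_finite[OF qm e2[unfolded zero_ereal_def]]
  define G where "G x = ln u + real_of_ereal (eln (h x)) + (1 - t) * real_of_ereal (gquot (c x) u t)" for x
  have ps: "prob_space M" using assms(1) by (simp add: game_def)
  then interpret prob_space M .
  have Gi: "integrable M G" unfolding G_def using F1(2) F2(2)
    by (intro Bochner_Integration.integrable_add integrable_mult_right integrable_const) auto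
  have Gint: "integral\<^sup>L M G = ln u + r"
  proof -
    have "integral\<^sup>L M G = integral\<^sup>L M (\<lambda>x. ln u) + integral\<^sup>L M (\<lambda>x. real_of_ereal (eln (h x)))
        + (1 - t) * integral\<^sup>L M (\<lambda>x. real_of_ereal (gquot (c x) u t))"
      unfolding G_def using F1(2) F2(2) by simp
    also have "\<dots> = ln u + r" using F1(3) F2(3) by (simp add: prob_space)
    finally show ?thesis .
  qed
  have pw: "AE x in M. eln (c x) \<le> ereal (G x)"
    using F1(1)
  proof eventually_elim
    case (elim x)
    then have hp: "0 < h x" by (auto simp: eln_def split: if_splits)
    have d: "c x * t - u * t + u = u * h x" unfolding h_def using u0 by (simp add: field_simps)
    have dp: "0 < u * h x" using u0 hp by simp
    have Q: "real_of_ereal (gquot (c x) u t) = (c x - u) / (u * h x)"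
      unfolding gquot_def Let_def d using dp by simp
    show ?case
    proof (cases "0 < c x")
      case False then show ?thesis by (simp add: eln_def)
    next
      case True
      have "ln (c x / (u * h x)) \<le> c x / (u * h x) - 1" using True dp by (intro ln_le_minus_one) simp
      also have "\<dots> = (1 - t) * ((c x - u) / (u * h x))"
        using dp by (simp add: field_simps d[symmetric])
      finally have "ln (c x) - ln u - ln (h x) \<le> (1 - t) * ((c x - u) / (u * h x))"
        using True u0 hp by (simp add: ln_div ln_mult)
      then show ?thesis using True hp unfolding G_def Q by (simp add: eln_def)
    qed
  qed
  have "eint M (\<lambda>x. eln (c x)) \<le> eint M (\<lambda>x. ereal (G x))" by (rule eint_mono_AE[OF pw])
  also have "\<dots> = ereal (ln u + r)" using eint_real[OF Gi] Gint by simp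
  finally have "eexp (eint M (\<lambda>x. eln (c x))) \<le> ereal (exp (ln u + r))" by (rule eexp_mono_ereal)
  also have "\<dots> = ereal (u * exp r)" using u0 by (simp add: exp_add)
  finally have X: "eexp (eint M (\<lambda>x. eln (c x))) \<le> ereal (u * exp r)" .
  have nn: "0 \<le> eexp z" for z by (cases z) (auto simp: eexp_def)
  have fv: "fval M a b r p = eexp (eint M (\<lambda>x. eln (c x))) / ereal (exp r)"
    by (simp add: fval_def c_def)
  have "eexp (eint M (\<lambda>x. eln (c x))) / ereal (exp r) \<le> ereal u"
  proof (cases "eexp (eint M (\<lambda>x. eln (c x)))")
    case (real v)
    then show ?thesis using X by (simp add: divide_le_eq)
  qed (use X in auto)
  then show ?thesis unfolding fv .
qed

end
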